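(* Every maximum class $C\subseteq\{0,1\}^n$ of VC-dimension $2$ can be corner-peeled.
   Context: $C\subseteq\{0,1\}^n$ is maximum of VC-dimension $2$ if its VC-dimension is $2$ and $|C|=1+n+\binom{n}{2}$. One-inclusion graph $\Gamma(C)$: vertices $C$, edges between concepts differing in exactly one coordinate. A $k$-cube in $C$ is a set of $2^k$ points of $C$ agreeing outside some $k$ coordinates and taking all values on them. $C$ can be corner-peeled if there is an ordering $v_1,\dots,v_{|C|}$ of $C$ such that, with $C_0=C$ and $C_t=C_{t-1}\setminus\{v_t\}$, for each $t$ there is a unique cube $C'_{t-1}$ of maximum dimension among cubes contained in $C_{t-1}$ that contain $v_t$, and all neighbours of $v_t$ in $\Gamma(C_{t-1})$ lie in $C'_{t-1}$ (so that $C_{|C|}=\emptyset$). *)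

theory Defs
  imports Main
begin

text \<open>Concepts in {0,1}^n are represented as boolean lists of length n;
  coordinates are the indices i < n.\<close>

definition cube_space :: "nat \<Rightarrow> bool list set" where
  "cube_space n = {x. length x = n}"

definition shatters :: "nat \<Rightarrow> bool list set \<Rightarrow> nat set \<Rightarrow> bool" where
  "shatters n C S \<longleftrightarrow> S \<subseteq> {..<n} \<and>
     (\<forall>T \<subseteq> S. \<exists>c\<in>C. \<forall>i\<in>S. c ! i \<longleftrightarrow> i \<in> T)"

definition vc_dim :: "nat \<Rightarrow> bool list set \<Rightarrow> nat" where
  "vc_dim n C = Max {card S | S. shatters n C S}"

definition maximum_vc2 :: "nat \<Rightarrow> bool list set \<Rightarrow> bool" where
  "maximum_vc2 n C \<longleftrightarrow> C \<subseteq> cube_space n \<and> vc_dim n C = 2 \<and>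
     card C = 1 + n + (n choose 2)"

definition oig_adj :: "nat \<Rightarrow> bool list \<Rightarrow> bool list \<Rightarrow> bool" where
  "oig_adj n u w \<longleftrightarrow> length u = n \<and> length w = n \<and>
     card {i. i < n \<and> u ! i \<noteq> w ! i} = 1"

definition is_cube :: "nat \<Rightarrow> nat set \<Rightarrow> bool list set \<Rightarrow> bool" where
  "is_cube n I Q \<longleftrightarrow> I \<subseteq> {..<n} \<and>
     (\<exists>b. length b = n \<and> Q = {x. length x = n \<and> (\<forall>i<n. i \<notin> I \<longrightarrow> x ! i = b ! i)})"

definition unique_max_cube :: "nat \<Rightarrow> bool list set \<Rightarrow> bool list \<Rightarrow> bool list set \<Rightarrow> bool" where
  "unique_max_cube n D v Q \<longleftrightarrow>
     (\<exists>I. is_cube n I Q \<and> Q \<subseteq> D \<and> v \<in> Q \<and>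
        (\<forall>J Q'. is_cube n J Q' \<and> Q' \<subseteq> D \<and> v \<in> Q' \<longrightarrow>
           card J \<le> card I \<and> (card J = card I \<longrightarrow> Q' = Q)))"

definition corner_peeling :: "nat \<Rightarrow> bool list set \<Rightarrow> bool list list \<Rightarrow> bool" where
  "corner_peeling n C vs \<longleftrightarrow> distinct vs \<and> set vs = C \<and>
     (\<forall>t < length vs.
        let D = C - set (take t vs); v = vs ! t in
        \<exists>Q. unique_max_cube n D v Q \<and> (\<forall>w\<in>D. oig_adj n v w \<longrightarrow> w \<in> Q))"

definition corner_peelable :: "nat \<Rightarrow> bool list set \<Rightarrow> bool" where
  "corner_peelable n C \<longleftrightarrow> (\<exists>vs. corner_peeling n C vs)"

end

theory Submission
  imports Defs
begin

definition fl :: "bool list \<Rightarrow> nat \<Rightarrow> bool list" where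
  "fl x k = x[k := \<not> x ! k]"

definition GP :: "nat \<Rightarrow> bool list set \<Rightarrow> bool" where
  "GP n X \<longleftrightarrow> (\<forall>u\<in>X. \<forall>w\<in>X. u \<noteq> w \<longrightarrow> (\<exists>k<n. u ! k \<noteq> w ! k \<and> fl u k \<in> X))"

definition VC1 :: "nat \<Rightarrow> bool list set \<Rightarrow> bool" where
  "VC1 n X \<longleftrightarrow> (\<forall>j<n. \<forall>k<n. j \<noteq> k \<longrightarrow> \<not> (\<forall>a b. \<exists>x\<in>X. x ! j = a \<and> x ! k = b))"

definition Nb :: "bool list set \<Rightarrow> nat \<Rightarrow> bool \<Rightarrow> bool list set" where
  "Nb D j a = {x\<in>D. x ! j = a \<and> fl x j \<in> D}"

definition Hs :: "bool list set \<Rightarrow> nat \<Rightarrow> bool \<Rightarrow> bool list set" where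
  "Hs D j a = {x\<in>D. x ! j = a}"

definition Kd :: "nat \<Rightarrow> bool list set \<Rightarrow> bool list \<Rightarrow> nat set" where
  "Kd n D v = {k. k < n \<and> fl v k \<in> D}"

definition cubeat :: "nat \<Rightarrow> nat set \<Rightarrow> bool list \<Rightarrow> bool list set" where
  "cubeat n K v = {x. length x = n \<and> (\<forall>i<n. i \<notin> K \<longrightarrow> x ! i = v ! i)}"

definition corner :: "nat \<Rightarrow> bool list set \<Rightarrow> bool list \<Rightarrow> bool" where
  "corner n D v \<longleftrightarrow> v \<in> D \<and> cubeat n (Kd n D v) v \<subseteq> D"

definition FF :: "nat \<Rightarrow> bool list set \<Rightarrow> bool" where
  "FF n D \<longleftrightarrow> D \<subseteq> cube_space n \<and> (\<forall>j<n. \<forall>a. GP n (Nb D j a) \<and> VC1 n (Nb D j a))"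

definition hd :: "nat \<Rightarrow> bool list \<Rightarrow> bool list \<Rightarrow> nat" where
  "hd n x y = card {i. i < n \<and> x ! i \<noteq> y ! i}"

lemma fl_len[simp]: "length (fl x k) = length x"
  by (simp add: fl_def)

lemma fl_nth_same[simp]: "k < length x \<Longrightarrow> fl x k ! k = (\<not> x ! k)"
  by (simp add: fl_def)

lemma fl_nth_other[simp]: "i \<noteq> k \<Longrightarrow> fl x k ! i = x ! i"
  by (simp add: fl_def)

lemma fl_fl[simp]: "k < length x \<Longrightarrow> fl (fl x k) k = x"
  by (simp add: fl_def)

lemma fl_swap: "fl (fl x k) l = fl (fl x l) k"
  by (cases "k = l") (simp_all add: fl_def list_update_swap)

lemma fl_neq: "k < length x \<Longrightarrow> fl x k \<noteq> x"
  by (metis fl_nth_same)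

lemma cube_len: "x \<in> cube_space n \<Longrightarrow> length x = n"
  by (simp add: cube_space_def)

lemma finite_cube: "finite (cube_space n)"
proof -
  have "cube_space n = {xs. set xs \<subseteq> (UNIV::bool set) \<and> length xs = n}"
    by (auto simp: cube_space_def)
  then show ?thesis using finite_lists_length_eq[of "UNIV::bool set" n] by simp
qed

lemma list_eqI: "length x = n \<Longrightarrow> length y = n \<Longrightarrow> (\<And>i. i < n \<Longrightarrow> x ! i = y ! i) \<Longrightarrow> x = y"
  by (simp add: nth_equalityI)

lemma diff0: "length x = n \<Longrightarrow> length v = n \<Longrightarrow> {i. i < n \<and> x ! i \<noteq> v ! i} = {} \<Longrightarrow> x = v"
  by (rule list_eqI[of _ n]) auto

lemma diff1: assumes "length x = n" "length v = n" "{i. i < n \<and> x ! i \<noteq> v ! i} = {a}"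
  shows "x = fl v a"
proof (rule list_eqI[of _ n])
  have a: "a < n" "x ! a \<noteq> v ! a" using assms(3) by blast+
  have o: "\<And>i. i < n \<Longrightarrow> i \<noteq> a \<Longrightarrow> x ! i = v ! i" using assms(3) by blast
  fix i assume "i < n"
  show "x ! i = fl v a ! i"
    using a o[OF \<open>i < n\<close>] assms(2) by (cases "i = a") auto
qed (use assms in auto)

lemma diff2: assumes "length x = n" "length v = n" "{i. i < n \<and> x ! i \<noteq> v ! i} = {a, b}" "a \<noteq> b"
  shows "x = fl (fl v a) b"
proof (rule list_eqI[of _ n])
  have a: "a < n" "x ! a \<noteq> v ! a" "b < n" "x ! b \<noteq> v ! b" using assms(3) by blast+
  have o: "\<And>i. i < n \<Longrightarrow> i \<noteq> a \<Longrightarrow> i \<noteq> b \<Longrightarrow> x ! i = v ! i" using assms(3) by blast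
  fix i assume "i < n"
  show "x ! i = fl (fl v a) b ! i"
    using a o[OF \<open>i < n\<close>] assms(2,4) by (cases "i = a"; cases "i = b") auto
qed (use assms in auto)

lemma sub2: assumes "S \<subseteq> {a, b}" shows "S = {} \<or> S = {a} \<or> S = {b} \<or> S = {a, b}"
proof (cases "a \<in> S"; cases "b \<in> S")
  assume "a \<in> S" "b \<in> S" then have "S = {a, b}" using assms by blast then show ?thesis by blast
next
  assume "a \<in> S" "b \<notin> S" then have "S = {a}" using assms by blast then show ?thesis by blast
next
  assume "a \<notin> S" "b \<in> S" then have "S = {b}" using assms by blast then show ?thesis by blast
next
  assume "a \<notin> S" "b \<notin> S" then have "S = {}" using assms by blast then show ?thesis by blast
qed

lemma corner_small:
  assumes D: "D \<subseteq> cube_space n" and v: "v \<in> D"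
    and K: "\<And>k. k < n \<Longrightarrow> fl v k \<in> D \<Longrightarrow> k = a \<or> k = b"
    and cl: "fl v a \<in> D \<Longrightarrow> fl v b \<in> D \<Longrightarrow> a \<noteq> b \<Longrightarrow> fl (fl v a) b \<in> D"
  shows "corner n D v"
  unfolding corner_def
proof (intro conjI v subsetI)
  fix x assume x: "x \<in> cubeat n (Kd n D v) v"
  have lv: "length v = n" using D v cube_len by blast
  have lx: "length x = n" using x by (simp add: cubeat_def)
  let ?S = "{i. i < n \<and> x ! i \<noteq> v ! i}"
  have S: "?S \<subseteq> Kd n D v" using x by (auto simp: cubeat_def)
  then have S1: "\<And>i. i \<in> ?S \<Longrightarrow> fl v i \<in> D \<and> (i = a \<or> i = b)"
    using K by (auto simp: Kd_def)
  have "?S \<subseteq> {a, b}" using S1 by blast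
  then consider "?S = {}" | "?S = {a}" | "?S = {b}" | "?S = {a, b}" using sub2 by metis
  then show "x \<in> D"
  proof cases
    case 1 then show ?thesis using diff0[OF lx lv] v by simp
  next
    case 2
    then have "fl v a \<in> D" using S1[of a] by blast
    then show ?thesis using diff1[OF lx lv 2] by simp
  next
    case 3
    then have "fl v b \<in> D" using S1[of b] by blast
    then show ?thesis using diff1[OF lx lv 3] by simp
  next
    case 4
    then have ab: "fl v a \<in> D" "fl v b \<in> D" using S1[of a] S1[of b] by blast+
    show ?thesis
    proof (cases "a = b")
      case True then have "?S = {a}" using 4 by simp
      then show ?thesis using diff1[OF lx lv] ab by simp
    next
      case False then show ?thesis using diff2[OF lx lv 4 False] ab cl by simp
    qed
  qed
qed

lemma hd_flip_up:
  assumes "length v = n" "k < n" "v ! k = w ! k"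
  shows "hd n (fl v k) w = Suc (hd n v w)"
proof -
  have "{i. i < n \<and> fl v k ! i \<noteq> w ! i} = insert k {i. i < n \<and> v ! i \<noteq> w ! i}"
    using assms by (auto simp: nth_list_update fl_def)
  moreover have "k \<notin> {i. i < n \<and> v ! i \<noteq> w ! i}" using assms by simp
  ultimately show ?thesis unfolding hd_def by simp
qed

lemma hd_flip_down:
  assumes "length v = n" "k < n" "v ! k \<noteq> w ! k"
  shows "hd n (fl v k) w < hd n v w"
proof -
  have eq: "{i. i < n \<and> fl v k ! i \<noteq> w ! i} = {i. i < n \<and> v ! i \<noteq> w ! i} - {k}"
    using assms by (auto simp: nth_list_update fl_def)
  have kin: "k \<in> {i. i < n \<and> v ! i \<noteq> w ! i}" using assms by simp
  have fin: "finite {i. i < n \<and> v ! i \<noteq> w ! i}" by simp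
  show ?thesis unfolding hd_def eq using card_Diff1_less[OF fin kin] .
qed

lemma hd_pos:
  assumes "length v = n" "length w = n" "v \<noteq> w"
  shows "0 < hd n v w"
proof -
  have "\<exists>i<n. v ! i \<noteq> w ! i"
  proof (rule ccontr)
    assume "\<not> (\<exists>i<n. v ! i \<noteq> w ! i)"
    then have "v = w" by (intro list_eqI[OF assms(1,2)]) auto
    then show False using assms(3) by blast
  qed
  then obtain i where "i < n" "v ! i \<noteq> w ! i" by blast
  then have "{i. i < n \<and> v ! i \<noteq> w ! i} \<noteq> {}" by blast
  then show ?thesis unfolding hd_def by (simp add: card_gt_0_iff)
qed

lemma farthest:
  assumes "finite X" "X \<noteq> {}"
  obtains v where "v \<in> X" "\<And>y. y \<in> X \<Longrightarrow> hd n y w \<le> hd n v w"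
proof -
  have "finite ((\<lambda>y. hd n y w) ` X)" "(\<lambda>y. hd n y w) ` X \<noteq> {}" using assms by auto
  then have "Max ((\<lambda>y. hd n y w) ` X) \<in> (\<lambda>y. hd n y w) ` X" by (rule Max_in)
  then obtain v where v: "v \<in> X" "hd n v w = Max ((\<lambda>y. hd n y w) ` X)" by auto
  show ?thesis
  proof (rule that[OF v(1)])
    fix y assume "y \<in> X"
    then show "hd n y w \<le> hd n v w" unfolding v(2) using assms(1) by simp
  qed
qed

lemma leaf:
  assumes V: "VC1 n X" and X: "X \<subseteq> cube_space n" and w: "w \<in> X" and v: "v \<in> X"
    and far: "\<And>y. y \<in> X \<Longrightarrow> hd n y w \<le> hd n v w"
    and k: "k < n" "fl v k \<in> X" and l: "l < n" "fl v l \<in> X"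
  shows "k = l"
proof (rule ccontr)
  assume kl: "k \<noteq> l"
  have lv: "length v = n" using X v cube_len by blast
  have vk: "v ! k \<noteq> w ! k"
  proof
    assume "v ! k = w ! k"
    then have "hd n (fl v k) w = Suc (hd n v w)" using hd_flip_up lv k by blast
    with far[OF k(2)] show False by simp
  qed
  have vl: "v ! l \<noteq> w ! l"
  proof
    assume "v ! l = w ! l"
    then have "hd n (fl v l) w = Suc (hd n v w)" using hd_flip_up lv l by blast
    with far[OF l(2)] show False by simp
  qed
  have "\<forall>a b. \<exists>x\<in>X. x ! k = a \<and> x ! l = b"
  proof (intro allI)
    fix a b
    show "\<exists>x\<in>X. x ! k = a \<and> x ! l = b"
    proof (cases "a = v ! k"; cases "b = v ! l")
      assume "a = v ! k" "b = v ! l" then show ?thesis using v by blast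
    next
      assume "a = v ! k" "b \<noteq> v ! l"
      then have "fl v l ! k = a \<and> fl v l ! l = b" using kl lv l by auto
      then show ?thesis using l by blast
    next
      assume "a \<noteq> v ! k" "b = v ! l"
      then have "fl v k ! k = a \<and> fl v k ! l = b" using kl lv k by auto
      then show ?thesis using k by blast
    next
      assume "a \<noteq> v ! k" "b \<noteq> v ! l"
      then have "w ! k = a \<and> w ! l = b" using vk vl by auto
      then show ?thesis using w by blast
    qed
  qed
  then show False using V k l kl unfolding VC1_def by blast
qed

lemma VC1_mono: assumes "VC1 n X" "Y \<subseteq> X" shows "VC1 n Y"
  unfolding VC1_def
proof (intro allI impI notI)
  fix j k assume jk: "j < n" "k < n" "j \<noteq> k" and all: "\<forall>a b. \<exists>x\<in>Y. x ! j = a \<and> x ! k = b"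
  have "\<forall>a b. \<exists>x\<in>X. x ! j = a \<and> x ! k = b"
  proof (intro allI)
    fix a b
    obtain x where "x \<in> Y" "x ! j = a \<and> x ! k = b" using all by blast
    then show "\<exists>x\<in>X. x ! j = a \<and> x ! k = b" using assms(2) by blast
  qed
  then show False using assms(1) jk unfolding VC1_def by simp
qed

lemma GP_Hs:
  assumes "GP n X" "X \<subseteq> cube_space n"
  shows "GP n (Hs X i a)"
  unfolding GP_def
proof (intro ballI impI)
  fix u w assume u: "u \<in> Hs X i a" and w: "w \<in> Hs X i a" and uw: "u \<noteq> w"
  then obtain k where k: "k < n" "u ! k \<noteq> w ! k" "fl u k \<in> X"
    using assms(1) unfolding GP_def Hs_def by blast
  have "k \<noteq> i" using u w k(2) unfolding Hs_def by auto
  then have "fl u k ! i = a" using u unfolding Hs_def by simp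
  then show "\<exists>k<n. u ! k \<noteq> w ! k \<and> fl u k \<in> Hs X i a" using k unfolding Hs_def by blast
qed

lemma rm_GP:
  assumes G: "GP n X" and X: "X \<subseteq> cube_space n" and c: "c \<in> X"
    and cl: "\<And>k l. k < n \<Longrightarrow> l < n \<Longrightarrow> k \<noteq> l \<Longrightarrow> fl c k \<in> X \<Longrightarrow> fl c l \<in> X \<Longrightarrow> fl (fl c k) l \<in> X"
  shows "GP n (X - {c})"
  unfolding GP_def
proof (intro ballI impI)
  fix u w assume u: "u \<in> X - {c}" and w: "w \<in> X - {c}" and uw: "u \<noteq> w"
  then obtain k where k: "k < n" "u ! k \<noteq> w ! k" "fl u k \<in> X"
    using G unfolding GP_def by blast
  show "\<exists>k<n. u ! k \<noteq> w ! k \<and> fl u k \<in> X - {c}"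
  proof (cases "fl u k = c")
    case False then show ?thesis using k by blast
  next
    case True
    have lu: "length u = n" using u X cube_len by blast
    have uc: "u = fl c k" using True lu k(1) by (metis fl_fl)
    have lc: "length c = n" using lu uc by simp
    have "c \<noteq> w" using w by blast
    then obtain l where l: "l < n" "c ! l \<noteq> w ! l" "fl c l \<in> X"
      using G c w unfolding GP_def by blast
    have ck: "c ! k = w ! k" using True k lu by (metis fl_nth_same)
    then have kl: "k \<noteq> l" using l(2) by blast
    have "fl c k \<in> X" using uc u by blast
    then have "fl u l \<in> X" using cl[OF k(1) l(1) kl] uc l(3) by simp
    moreover have "fl u l \<noteq> c"
    proof
      assume "fl u l = c"
      then have "fl u l ! k = c ! k" by simp
      then show False using uc kl lc k(1) by simp
    qed
    moreover have "u ! l \<noteq> w ! l" using uc kl l(2) by simp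
    ultimately show ?thesis using l(1) by blast
  qed
qed

lemma edge_exists:
  assumes G: "GP n T" and T: "T \<subseteq> cube_space n" and u: "u \<in> T" and w: "w \<in> T" and i: "i < n"
    and d: "u ! i \<noteq> w ! i"
  shows "\<exists>x\<in>T. fl x i \<in> T"
  using u d
proof (induction "hd n u w" arbitrary: u rule: less_induct)
  case less
  have "u \<noteq> w" using less.prems by blast
  then obtain k where k: "k < n" "u ! k \<noteq> w ! k" "fl u k \<in> T"
    using G less.prems w unfolding GP_def by blast
  show ?case
  proof (cases "k = i")
    case True then show ?thesis using k less.prems by blast
  next
    case False
    have lu: "length u = n" using less.prems T cube_len by blast
    have "hd n (fl u k) w < hd n u w" using hd_flip_down lu k by blast
    moreover have "fl u k ! i \<noteq> w ! i" using False less.prems by simp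
    ultimately show ?thesis using less.hyps k(3) by blast
  qed
qed

lemma fl_inv: "length x = n \<Longrightarrow> k < n \<Longrightarrow> fl x k = y \<Longrightarrow> x = fl y k"
  by auto

lemma GP_empty: "GP n {}" unfolding GP_def by simp

lemma VC1_empty: "VC1 n {}" unfolding VC1_def by simp

lemma cube_fl: assumes "y \<in> cubeat n K c" "k \<in> K" shows "fl y k \<in> cubeat n K c"
proof -
  have "fl y k ! i = c ! i" if "i < n" "i \<notin> K" for i
  proof -
    have "i \<noteq> k" using that assms(2) by blast
    then have "fl y k ! i = y ! i" by simp
    then show ?thesis using assms(1) that unfolding cubeat_def by simp
  qed
  then show ?thesis using assms(1) unfolding cubeat_def by simp
qed

lemma FF_cube: "FF n D \<Longrightarrow> D \<subseteq> cube_space n" unfolding FF_def by simp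

lemma FF_Nb: "FF n D \<Longrightarrow> j < n \<Longrightarrow> GP n (Nb D j a) \<and> VC1 n (Nb D j a)" unfolding FF_def by simp

lemma Nb_sub: "Nb D j a \<subseteq> D" unfolding Nb_def by blast
lemma Hs_sub: "Hs D j a \<subseteq> D" unfolding Hs_def by blast

lemma FF_Hs:
  assumes F: "FF n D" and i: "i < n"
  shows "FF n (Hs D i a)"
proof -
  have Dc: "D \<subseteq> cube_space n" using F FF_cube by blast
  have "GP n (Nb (Hs D i a) j b) \<and> VC1 n (Nb (Hs D i a) j b)" if j: "j < n" for j b
  proof (cases "j = i")
    case True
    have "Nb (Hs D i a) j b = {}"
    proof (rule ccontr)
      assume "Nb (Hs D i a) j b \<noteq> {}"
      then obtain x where x: "x \<in> D" "x ! i = a" "fl x i \<in> D" "fl x i ! i = a"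
        using True unfolding Nb_def Hs_def by blast
      have "length x = n" using x(1) Dc cube_len by blast
      then show False using x i by simp
    qed
    then show ?thesis using GP_empty VC1_empty by simp
  next
    case False
    have eq: "Nb (Hs D i a) j b = Hs (Nb D j b) i a"
      unfolding Nb_def Hs_def using False by auto
    have "Nb D j b \<subseteq> cube_space n" using Dc Nb_sub by blast
    have G: "GP n (Nb D j b)" and V: "VC1 n (Nb D j b)" using FF_Nb[OF F j] by auto
    have "GP n (Hs (Nb D j b) i a)" by (rule GP_Hs[OF G \<open>Nb D j b \<subseteq> cube_space n\<close>])
    moreover have "VC1 n (Hs (Nb D j b) i a)" by (rule VC1_mono[OF V Hs_sub])
    ultimately show ?thesis unfolding eq by simp
  qed
  moreover have "Hs D i a \<subseteq> cube_space n" using Dc Hs_sub by blast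
  ultimately show ?thesis unfolding FF_def by blast
qed

lemma FF_rm:
  assumes F: "FF n D" and c: "corner n D c"
  shows "FF n (D - {c})"
proof -
  have Dc: "D \<subseteq> cube_space n" using F FF_cube by blast
  have cD: "c \<in> D" and cube: "cubeat n (Kd n D c) c \<subseteq> D" using c unfolding corner_def by auto
  have lc: "length c = n" using cD Dc cube_len by blast
  have ccube: "c \<in> cubeat n (Kd n D c) c" using lc unfolding cubeat_def by simp
  have "GP n (Nb (D - {c}) j b) \<and> VC1 n (Nb (D - {c}) j b)" if j: "j < n" for j b
  proof -
    have G: "GP n (Nb D j b)" and V: "VC1 n (Nb D j b)" using FF_Nb[OF F j] by auto
    have sub: "Nb (D - {c}) j b \<subseteq> Nb D j b" unfolding Nb_def by blast
    have "GP n (Nb (D - {c}) j b)"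
    proof (cases "fl c j \<in> D")
      case False
      have "Nb (D - {c}) j b = Nb D j b"
      proof
        show "Nb (D - {c}) j b \<subseteq> Nb D j b" by (rule sub)
        show "Nb D j b \<subseteq> Nb (D - {c}) j b"
        proof
          fix x assume x: "x \<in> Nb D j b"
          then have x1: "x \<in> D" "fl x j \<in> D" unfolding Nb_def by auto
          have "x \<noteq> c" using x1(2) False by blast
          moreover have "fl x j \<noteq> c"
          proof
            assume "fl x j = c"
            moreover have "length x = n" using x1(1) Dc cube_len by blast
            ultimately have "x = fl c j" using fl_inv j by blast
            then show False using x1(1) False by blast
          qed
          ultimately show "x \<in> Nb (D - {c}) j b" using x unfolding Nb_def by blast
        qed
      qed
      then show ?thesis using G by simp
    next
      case True
      have jK: "j \<in> Kd n D c" using True j unfolding Kd_def by simp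
      define p where "p = (if c ! j = b then c else fl c j)"
      have pcube: "p \<in> cubeat n (Kd n D c) c" unfolding p_def using ccube cube_fl[OF ccube jK] by simp
      have lp: "length p = n" using pcube unfolding cubeat_def by simp
      have pj: "p ! j = b" unfolding p_def using lc j by auto
      have pD: "p \<in> D" using pcube cube by blast
      have pjD: "fl p j \<in> D" using cube_fl[OF pcube jK] cube by blast
      have pX: "p \<in> Nb D j b" using pD pj pjD unfolding Nb_def by blast
      have eq: "Nb (D - {c}) j b = Nb D j b - {p}"
      proof
        show "Nb (D - {c}) j b \<subseteq> Nb D j b - {p}"
        proof
          fix x assume x: "x \<in> Nb (D - {c}) j b"
          then have x1: "x \<in> D" "x \<noteq> c" "x ! j = b" "fl x j \<in> D" "fl x j \<noteq> c" unfolding Nb_def by auto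
          have "x \<noteq> p"
          proof
            assume "x = p"
            show False
            proof (cases "c ! j = b")
              case True then show False using x1(2) \<open>x = p\<close> unfolding p_def by simp
            next
              case False then have "x = fl c j" using \<open>x = p\<close> unfolding p_def by simp
              then have "fl x j = c" using lc j by simp
              then show False using x1(5) by blast
            qed
          qed
          then show "x \<in> Nb D j b - {p}" using x sub by blast
        qed
        show "Nb D j b - {p} \<subseteq> Nb (D - {c}) j b"
        proof
          fix x assume x: "x \<in> Nb D j b - {p}"
          then have x1: "x \<in> D" "x ! j = b" "fl x j \<in> D" "x \<noteq> p" unfolding Nb_def by auto
          have lx: "length x = n" using x1(1) Dc cube_len by blast
          have "x \<noteq> c \<and> fl x j \<noteq> c"
          proof (cases "c ! j = b")
            case True
            then have "x \<noteq> c" using x1(4) unfolding p_def by simp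
            moreover have "fl x j \<noteq> c"
            proof
              assume "fl x j = c" then have "fl x j ! j = b" using True by simp
              then show False using x1(2) lx j by simp
            qed
            ultimately show ?thesis by blast
          next
            case False
            then have "x \<noteq> c" using x1(2) by blast
            moreover have "fl x j \<noteq> c"
            proof
              assume "fl x j = c" then have "x = fl c j" using lx j fl_inv by blast
              then show False using x1(4) False unfolding p_def by simp
            qed
            ultimately show ?thesis by blast
          qed
          then show "x \<in> Nb (D - {c}) j b" using x1 unfolding Nb_def by blast
        qed
      qed
      have Xc: "Nb D j b \<subseteq> cube_space n" using Dc Nb_sub by blast
      have inK: "k \<in> Kd n D c" if k: "k < n" "fl p k \<in> Nb D j b" for k
      proof -
        have k1: "fl p k \<in> D" "fl p k ! j = b" "fl (fl p k) j \<in> D" using k(2) unfolding Nb_def by auto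
        have "fl c k \<in> D"
        proof (cases "c ! j = b")
          case True then show ?thesis using k1(1) unfolding p_def by simp
        next
          case False
          then have "fl (fl p k) j = fl c k" unfolding p_def using lc j by (simp add: fl_swap)
          then show ?thesis using k1(3) by simp
        qed
        then show ?thesis using k(1) unfolding Kd_def by simp
      qed
      have cl: "fl (fl p k) l \<in> Nb D j b"
        if kl: "k < n" "l < n" "k \<noteq> l" "fl p k \<in> Nb D j b" "fl p l \<in> Nb D j b" for k l
      proof -
        have kK: "k \<in> Kd n D c" and lK: "l \<in> Kd n D c" using inK kl by auto
        have k1: "fl p k ! j = b" using kl(4) unfolding Nb_def by blast
        have l1: "fl p l ! j = b" using kl(5) unfolding Nb_def by blast
        have kj: "k \<noteq> j"
        proof assume "k = j" then show False using k1 pj lp j by simp qed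
        have lj: "l \<noteq> j"
        proof assume "l = j" then show False using l1 pj lp j by simp qed
        have q: "fl (fl p k) l \<in> cubeat n (Kd n D c) c" using cube_fl[OF cube_fl[OF pcube kK] lK] .
        have q2: "fl (fl (fl p k) l) j \<in> cubeat n (Kd n D c) c" using cube_fl[OF q jK] .
        have "fl (fl p k) l ! j = b" using kj lj pj by simp
        then show ?thesis using q q2 cube unfolding Nb_def by blast
      qed
      have "GP n (Nb D j b - {p})" by (rule rm_GP[OF G Xc pX cl])
      then show ?thesis using eq by simp
    qed
    moreover have "VC1 n (Nb (D - {c}) j b)" using V sub VC1_mono by blast
    ultimately show ?thesis by blast
  qed
  moreover have "D - {c} \<subseteq> cube_space n" using Dc by blast
  ultimately show ?thesis unfolding FF_def by blast
qed

lemma lift_Hs: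
  assumes Dc: "D \<subseteq> cube_space n" and i: "i < n" and c: "c \<in> Hs D i a" "c \<notin> Nb D i a"
    and cor: "corner n (Hs D i a) c"
  shows "corner n D c"
proof -
  have cD: "c \<in> D" "c ! i = a" using c(1) unfolding Hs_def by auto
  have "Kd n D c = Kd n (Hs D i a) c"
  proof
    show "Kd n (Hs D i a) c \<subseteq> Kd n D c" unfolding Kd_def Hs_def by blast
    show "Kd n D c \<subseteq> Kd n (Hs D i a) c"
    proof
      fix k assume k: "k \<in> Kd n D c"
      then have k1: "k < n" "fl c k \<in> D" unfolding Kd_def by auto
      have "k \<noteq> i"
      proof
        assume "k = i"
        then have "c \<in> Nb D i a" using cD k1 unfolding Nb_def by blast
        then show False using c(2) by blast
      qed
      then have "fl c k ! i = a" using cD by simp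
      then show "k \<in> Kd n (Hs D i a) c" using k1 unfolding Kd_def Hs_def by blast
    qed
  qed
  then show ?thesis using cor cD Hs_sub unfolding corner_def by (metis subset_trans)
qed

lemma lift_rm:
  assumes cor: "corner n (D - {l}) c" and nadj: "\<And>k. k < n \<Longrightarrow> fl c k \<noteq> l"
  shows "corner n D c"
proof -
  have eq: "Kd n D c = Kd n (D - {l}) c" unfolding Kd_def using nadj by blast
  have "c \<in> D" using cor unfolding corner_def by blast
  moreover have "cubeat n (Kd n D c) c \<subseteq> D" using cor unfolding corner_def eq by blast
  ultimately show ?thesis unfolding corner_def by blast
qed

lemma corner_iso:
  assumes "v \<in> D" "D \<subseteq> cube_space n" "\<And>k. k < n \<Longrightarrow> fl v k \<notin> D"
  shows "corner n D v"
  by (rule corner_small[of D n v 0 0]) (use assms in auto)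

lemma TS:
  assumes Dc: "D \<subseteq> cube_space n" and i: "i < n" and NH: "Nb D i a = Hs D i a"
    and V: "VC1 n (Hs D i a)" and w: "w \<in> Hs D i a"
  shows "\<exists>v\<in>Hs D i a. corner n D v \<and> (Hs D i a \<noteq> {w} \<longrightarrow> v \<noteq> w)"
proof -
  let ?X = "Hs D i a"
  have Xc: "?X \<subseteq> cube_space n" using Dc Hs_sub by blast
  have fin: "finite ?X" using Xc finite_cube finite_subset by blast
  obtain v where v: "v \<in> ?X" and far: "\<And>y. y \<in> ?X \<Longrightarrow> hd n y w \<le> hd n v w"
    using farthest[OF fin] w by blast
  have lv: "length v = n" using v Xc cube_len by blast
  have vD: "v \<in> D" "v ! i = a" using v unfolding Hs_def by auto
  have vN: "fl v i \<in> D" using v NH unfolding Nb_def by blast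
  have inX: "fl v k \<in> ?X" if "k < n" "k \<noteq> i" "fl v k \<in> D" for k
    using that vD unfolding Hs_def by simp
  have cor: "corner n D v"
  proof (cases "\<exists>k<n. k \<noteq> i \<and> fl v k \<in> D")
    case True
    then obtain k where k: "k < n" "k \<noteq> i" "fl v k \<in> D" by blast
    show ?thesis
    proof (rule corner_small[OF Dc vD(1), of i k])
      fix m assume m: "m < n" "fl v m \<in> D"
      show "m = i \<or> m = k"
      proof (cases "m = i")
        case False
        have mX: "fl v m \<in> ?X" using inX[OF m(1) False m(2)] .
        have kX: "fl v k \<in> ?X" using inX[OF k] .
        have "m = k"
        proof (rule leaf[of n ?X w v m k])
          show "VC1 n ?X" by (rule V)
          show "?X \<subseteq> cube_space n" by (rule Xc)
          show "w \<in> ?X" by (rule w)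
          show "v \<in> ?X" by (rule v)
          show "\<And>y. y \<in> ?X \<Longrightarrow> hd n y w \<le> hd n v w" by (rule far)
        qed (use m(1) mX k(1) kX in auto)
        then show ?thesis by blast
      qed simp
    next
      have "fl v k \<in> Nb D i a" using inX[OF k] NH by simp
      then have "fl (fl v k) i \<in> D" unfolding Nb_def by blast
      then show "fl (fl v i) k \<in> D" by (simp add: fl_swap)
    qed
  next
    case False
    show ?thesis
    proof (rule corner_small[OF Dc vD(1), of i i])
      fix m assume m: "m < n" "fl v m \<in> D"
      then show "m = i \<or> m = i" using False by blast
    qed simp
  qed
  moreover have "v \<noteq> w" if ne: "?X \<noteq> {w}"
  proof -
    obtain y where y: "y \<in> ?X" "y \<noteq> w" using ne w by blast
    have "0 < hd n y w" using hd_pos y Xc cube_len w by (metis subsetD)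
    then have "0 < hd n v w" using far[OF y(1)] by simp
    moreover have "hd n w w = 0" unfolding hd_def by simp
    ultimately show ?thesis by auto
  qed
  ultimately show ?thesis using v by blast
qed

lemma G2:
  assumes "FF n D" "T \<subseteq> D" "GP n T" "VC1 n T" "T \<noteq> D"
  shows "\<exists>c\<in>D - T. corner n D c"
  using assms
proof (induction "card D" arbitrary: D T rule: less_induct)
  case less
  have F: "FF n D" and TD: "T \<subseteq> D" and GT: "GP n T" and VT: "VC1 n T" and TnD: "T \<noteq> D"
    using less.prems by auto
  have Dc: "D \<subseteq> cube_space n" using F FF_cube by blast
  have finD: "finite D" using Dc finite_cube finite_subset by blast
  have Tc: "T \<subseteq> cube_space n" using TD Dc by blast
  have finT: "finite T" using Tc finite_cube finite_subset by blast
  have IH: "\<And>D' T'. card D' < card D \<Longrightarrow> FF n D' \<Longrightarrow> T' \<subseteq> D' \<Longrightarrow> GP n T' \<Longrightarrow> VC1 n T' \<Longrightarrow> T' \<noteq> D'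
      \<Longrightarrow> \<exists>c\<in>D' - T'. corner n D' c"
    using less.hyps by blast
  have lenD: "\<And>x. x \<in> D \<Longrightarrow> length x = n" using Dc cube_len by blast
  show ?case
  proof (cases "\<exists>i<n. (\<exists>x\<in>D. fl x i \<in> D) \<and> \<not> (\<exists>x\<in>T. fl x i \<in> T)")
    case True
    then obtain i x0 where i: "i < n" and x0: "x0 \<in> D" "fl x0 i \<in> D" and noT: "\<not> (\<exists>x\<in>T. fl x i \<in> T)"
      by blast
    obtain b where Tb: "\<And>t. t \<in> T \<Longrightarrow> t ! i = b"
    proof (cases "T = {}")
      case True then show ?thesis using that by blast
    next
      case False
      then obtain t0 where t0: "t0 \<in> T" by blast
      have "t ! i = t0 ! i" if t: "t \<in> T" for t
      proof (rule ccontr)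
        assume "t ! i \<noteq> t0 ! i"
        then have "\<exists>x\<in>T. fl x i \<in> T" using edge_exists[OF GT Tc t t0 i] by blast
        then show False using noT by blast
      qed
      then show ?thesis using that by blast
    qed
    define a where "a = (\<not> b)"
    let ?H = "Hs D i a" and ?N = "Nb D i a"
    have lx0: "length x0 = n" using x0 lenD by blast
    have Hne: "?H \<noteq> {}"
    proof (cases "x0 ! i = a")
      case True then show ?thesis using x0 unfolding Hs_def by blast
    next
      case False then have "fl x0 i ! i = a" using lx0 i by simp
      then show ?thesis using x0 unfolding Hs_def by blast
    qed
    have HD: "?H \<noteq> D"
    proof (cases "x0 ! i = a")
      case False then show ?thesis using x0 unfolding Hs_def by blast
    next
      case True then have "fl x0 i ! i \<noteq> a" using lx0 i by simp
      then show ?thesis using x0 unfolding Hs_def by blast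
    qed
    have psH: "?H \<subset> D" using Hs_sub[of D i a] HD by (rule psubsetI)
    have cardH: "card ?H < card D" using psubset_card_mono[OF finD psH] .
    have FH: "FF n ?H" using FF_Hs[OF F i] .
    have NH: "?N \<subseteq> ?H" unfolding Nb_def Hs_def by blast
    have GN: "GP n ?N" and VN: "VC1 n ?N" using FF_Nb[OF F i] by auto
    have notT: "x \<notin> T" if "x \<in> ?H" for x
    proof
      assume "x \<in> T" then have "x ! i = b" using Tb by blast
      then show False using that unfolding Hs_def a_def by simp
    qed
    show ?thesis
    proof (cases "?N = ?H")
      case False
      then obtain c where c: "c \<in> ?H - ?N" "corner n ?H c" using IH[OF cardH FH NH GN VN] by blast
      have "corner n D c" using lift_Hs[OF Dc i _ _ c(2)] c(1) by blast
      moreover have "c \<in> D - T" using c(1) notT Hs_sub by blast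
      ultimately show ?thesis by blast
    next
      case True
      obtain w where w: "w \<in> ?H" using Hne by blast
      have VH: "VC1 n ?H" using VN True by simp
      obtain v where v: "v \<in> ?H" "corner n D v" using TS[OF Dc i True VH w] by blast
      then have "v \<in> D - T" using notT Hs_sub by blast
      then show ?thesis using v by blast
    qed
  next
    case False
    then have cross: "\<And>i. i < n \<Longrightarrow> (\<exists>x\<in>D. fl x i \<in> D) \<Longrightarrow> (\<exists>x\<in>T. fl x i \<in> T)" by blast
    show ?thesis
    proof (cases "\<exists>i<n. \<exists>x\<in>T. fl x i \<in> T")
      case False
      obtain c where c: "c \<in> D" "c \<notin> T" using TD TnD by blast
      have "\<And>k. k < n \<Longrightarrow> fl c k \<notin> D" using cross False c(1) by blast
      then have "corner n D c" using corner_iso[OF c(1) Dc] by blast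
      then show ?thesis using c by blast
    next
      case True
      then obtain i0 x0 where i0: "i0 < n" and x0: "x0 \<in> T" "fl x0 i0 \<in> T" by blast
      obtain l where l: "l \<in> T" and far: "\<And>y. y \<in> T \<Longrightarrow> hd n y x0 \<le> hd n l x0"
        using farthest[OF finT] x0 by blast
      have lx0: "length x0 = n" using x0 Tc cube_len by blast
      have ll: "length l = n" using l Tc cube_len by blast
      have "l \<noteq> x0"
      proof
        assume "l = x0"
        have "0 < hd n (fl x0 i0) x0" using hd_pos[of "fl x0 i0" n x0] lx0 fl_neq i0 by simp
        moreover have "hd n x0 x0 = 0" unfolding hd_def by simp
        ultimately show False using far[OF x0(2)] \<open>l = x0\<close> by simp
      qed
      then obtain i where i: "i < n" "l ! i \<noteq> x0 ! i" "fl l i \<in> T"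
        using GT l x0(1) unfolding GP_def by blast
      have uniq: "k = i" if "k < n" "fl l k \<in> T" for k
      proof (rule leaf[of n T x0 l k i])
        show "VC1 n T" by (rule VT)
        show "T \<subseteq> cube_space n" by (rule Tc)
        show "x0 \<in> T" by (rule x0(1))
        show "l \<in> T" by (rule l)
        show "\<And>y. y \<in> T \<Longrightarrow> hd n y x0 \<le> hd n l x0" by (rule far)
      qed (use that i far in auto)
      define a where "a = l ! i"
      let ?H = "Hs D i a" and ?N = "Nb D i a"
      have HsT: "t = l" if t: "t \<in> T" "t ! i = a" for t
      proof (rule ccontr)
        assume "t \<noteq> l"
        then obtain k where k: "k < n" "l ! k \<noteq> t ! k" "fl l k \<in> T"
          using GT l t(1) \<open>t \<noteq> l\<close> unfolding GP_def by (metis (no_types, lifting))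
        then have "k = i" using uniq by blast
        then show False using k(2) t(2) unfolding a_def by simp
      qed
      have lD: "l \<in> D" "fl l i \<in> D" using l i(3) TD by auto
      have lN: "l \<in> ?N" using lD unfolding Nb_def a_def by simp
      have HD: "?H \<noteq> D"
      proof
        assume "?H = D"
        then have "fl l i \<in> ?H" using lD by simp
        then show False using ll i(1) unfolding Hs_def a_def by simp
      qed
      have psH: "?H \<subset> D" using Hs_sub[of D i a] HD by (rule psubsetI)
    have cardH: "card ?H < card D" using psubset_card_mono[OF finD psH] .
      have FH: "FF n ?H" using FF_Hs[OF F i(1)] .
      have NH: "?N \<subseteq> ?H" unfolding Nb_def Hs_def by blast
      have GN: "GP n ?N" and VN: "VC1 n ?N" using FF_Nb[OF F i(1)] by auto
      have lH: "l \<in> ?H" using lN NH by blast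
      show ?thesis
      proof (cases "?N = ?H")
        case False
        then obtain c where c: "c \<in> ?H - ?N" "corner n ?H c" using IH[OF cardH FH NH GN VN] by blast
        have "corner n D c" using lift_Hs[OF Dc i(1) _ _ c(2)] c(1) by blast
        moreover have "c \<notin> T"
        proof
          assume "c \<in> T"
          moreover have "c ! i = a" using c(1) unfolding Hs_def by blast
          ultimately have "c = l" using HsT by blast
          then show False using c(1) lN by blast
        qed
        ultimately show ?thesis using c(1) Hs_sub by blast
      next
        case True
        have VH: "VC1 n ?H" using VN True by simp
        show ?thesis
        proof (cases "?H = {l}")
          case False
          obtain v where v: "v \<in> ?H" "corner n D v" "v \<noteq> l" using TS[OF Dc i(1) True VH lH] False by blast
          have "v \<notin> T"
          proof
            assume "v \<in> T"
            moreover have "v ! i = a" using v(1) unfolding Hs_def by blast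
            ultimately show False using HsT v(3) by blast
          qed
          moreover have "v \<in> D" using v(1) Hs_sub[of D i a] by blast
          ultimately show ?thesis using v(2) by blast
        next
          case True
          have onlyi: "k = i" if "k < n" "fl l k \<in> D" for k
          proof (rule ccontr)
            assume "k \<noteq> i"
            then have "fl l k ! i = a" unfolding a_def by simp
            then have "fl l k \<in> ?H" using that unfolding Hs_def by blast
            then have "fl l k = l" using True by blast
            then show False using fl_neq[of k l] ll that(1) by simp
          qed
          have corl: "corner n D l"
          proof (rule corner_small[OF Dc lD(1), of i i])
            fix k assume "k < n" "fl l k \<in> D"
            then have "k = i" by (rule onlyi)
            then show "k = i \<or> k = i" by simp
          qed simp
          have FD': "FF n (D - {l})" using FF_rm[OF F corl] .
          have cardD': "card (D - {l}) < card D" using card_Diff1_less[OF finD lD(1)] .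
          have TD': "T - {l} \<subseteq> D - {l}" using TD by blast
          have GT': "GP n (T - {l})"
          proof (rule rm_GP[OF GT Tc l])
            fix k m assume km: "k < n" "m < n" "k \<noteq> m" "fl l k \<in> T" "fl l m \<in> T"
            have "k = i" using uniq km(1,4) .
            moreover have "m = i" using uniq km(2,5) .
            ultimately show "fl (fl l k) m \<in> T" using km(3) by simp
          qed
          have VT': "VC1 n (T - {l})" using VC1_mono[OF VT Diff_subset] .
          have TnD': "T - {l} \<noteq> D - {l}"
          proof
            assume "T - {l} = D - {l}"
            then have "insert l (T - {l}) = insert l (D - {l})" by simp
            then have "T = D" using l lD(1) insert_Diff by metis
            then show False using TnD by blast
          qed
          obtain c where c: "c \<in> (D - {l}) - (T - {l})" "corner n (D - {l}) c"
            using IH[OF cardD' FD' TD' GT' VT' TnD'] by blast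
          have nadj: "fl c k \<noteq> l" if k: "k < n" for k
          proof
            assume "fl c k = l"
            have lc: "length c = n" using c(1) lenD by blast
            have cl: "c = fl l k" using fl_inv[OF lc k \<open>fl c k = l\<close>] .
            then have "fl l k \<in> D" using c(1) by blast
            then have "k = i" using onlyi k by blast
            then have "c \<in> T" using cl i(3) by simp
            moreover have "c \<noteq> l" using c(1) by blast
            ultimately show False using c(1) by blast
          qed
          have "corner n D c" using lift_rm[OF c(2) nadj] by blast
          moreover have "c \<in> D - T" using c(1) by blast
          ultimately show ?thesis by blast
        qed
      qed
    qed
  qed
qed

lemma peel_list:
  assumes "FF n D"
  shows "\<exists>vs. distinct vs \<and> set vs = D \<and> (\<forall>t<length vs. corner n (D - set (take t vs)) (vs ! t))"
  using assms
proof (induction "card D" arbitrary: D rule: less_induct)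
  case less
  have Dc: "D \<subseteq> cube_space n" using less.prems FF_cube by blast
  have finD: "finite D" using Dc finite_cube finite_subset by blast
  show ?case
  proof (cases "D = {}")
    case True then show ?thesis by (intro exI[of _ "[]"]) simp
  next
    case False
    obtain c where c: "c \<in> D" "corner n D c"
      using G2[OF less.prems empty_subsetI GP_empty VC1_empty] False by blast
    have F': "FF n (D - {c})" using FF_rm[OF less.prems c(2)] .
    have "card (D - {c}) < card D" using card_Diff1_less[OF finD c(1)] .
    then obtain vs where vs: "distinct vs" "set vs = D - {c}"
      "\<forall>t<length vs. corner n ((D - {c}) - set (take t vs)) (vs ! t)"
      using less.hyps F' by blast
    have "distinct (c # vs)" using vs by simp
    moreover have "set (c # vs) = D" using vs c(1) by auto
    moreover have "\<forall>t<length (c # vs). corner n (D - set (take t (c # vs))) ((c # vs) ! t)"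
    proof (intro allI impI)
      fix t assume t: "t < length (c # vs)"
      show "corner n (D - set (take t (c # vs))) ((c # vs) ! t)"
      proof (cases t)
        case 0 then show ?thesis using c(2) by simp
      next
        case (Suc t')
        then have "t' < length vs" using t by simp
        then have "corner n ((D - {c}) - set (take t' vs)) (vs ! t')" using vs(3) by blast
        moreover have "D - set (take t (c # vs)) = (D - {c}) - set (take t' vs)" using Suc by auto
        ultimately show ?thesis using Suc by simp
      qed
    qed
    ultimately show ?thesis by blast
  qed
qed

lemma corner_good:
  assumes Dc: "D \<subseteq> cube_space n" and cor: "corner n D v"
  shows "\<exists>Q. unique_max_cube n D v Q \<and> (\<forall>w\<in>D. oig_adj n v w \<longrightarrow> w \<in> Q)"
proof -
  let ?K = "Kd n D v"
  let ?Q = "cubeat n ?K v"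
  have vD: "v \<in> D" and QD: "?Q \<subseteq> D" using cor unfolding corner_def by auto
  have lv: "length v = n" using vD Dc cube_len by blast
  have Kn: "?K \<subseteq> {..<n}" unfolding Kd_def by auto
  have finK: "finite ?K" using Kn finite_subset by blast
  have isc: "is_cube n ?K ?Q" unfolding is_cube_def cubeat_def using Kn lv by blast
  have vQ: "v \<in> ?Q" unfolding cubeat_def using lv by simp
  have maxc: "card J \<le> card ?K \<and> (card J = card ?K \<longrightarrow> Q' = ?Q)"
    if J: "is_cube n J Q'" "Q' \<subseteq> D" "v \<in> Q'" for J Q'
  proof -
    obtain b where b: "length b = n" "Q' = {x. length x = n \<and> (\<forall>i<n. i \<notin> J \<longrightarrow> x ! i = b ! i)}"
      and Jn: "J \<subseteq> {..<n}" using J(1) unfolding is_cube_def by blast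
    have vb: "\<And>i. i < n \<Longrightarrow> i \<notin> J \<Longrightarrow> v ! i = b ! i" using J(3) b(2) by blast
    have JK: "J \<subseteq> ?K"
    proof
      fix j assume j: "j \<in> J"
      then have jn: "j < n" using Jn by blast
      have "fl v j \<in> Q'"
      proof -
        have "fl v j ! i = b ! i" if "i < n" "i \<notin> J" for i
        proof -
          have "i \<noteq> j" using that j by blast
          then show ?thesis using vb that by simp
        qed
        then show ?thesis using b(2) lv by simp
      qed
      then have "fl v j \<in> D" using J(2) by blast
      then show "j \<in> ?K" unfolding Kd_def using jn by simp
    qed
    have c1: "card J \<le> card ?K" using card_mono[OF finK JK] .
    have "Q' = ?Q" if ce: "card J = card ?K"
    proof -
      have JeK: "J = ?K" using card_subset_eq[OF finK JK ce] .
      show ?thesis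
      proof
        show "Q' \<subseteq> ?Q"
        proof
          fix x assume "x \<in> Q'"
          then have x: "length x = n" "\<And>i. i < n \<Longrightarrow> i \<notin> J \<Longrightarrow> x ! i = b ! i" using b(2) by auto
          show "x \<in> ?Q" unfolding cubeat_def using x vb JeK by auto
        qed
        show "?Q \<subseteq> Q'"
        proof
          fix x assume "x \<in> ?Q"
          then have x: "length x = n" "\<And>i. i < n \<Longrightarrow> i \<notin> ?K \<Longrightarrow> x ! i = v ! i" unfolding cubeat_def by auto
          show "x \<in> Q'" unfolding b(2) using x vb JeK by auto
        qed
      qed
    qed
    then show ?thesis using c1 by blast
  qed
  have umc: "unique_max_cube n D v ?Q"
    unfolding unique_max_cube_def using isc QD vQ maxc by blast
  have nb: "w \<in> ?Q" if w: "w \<in> D" "oig_adj n v w" for w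
  proof -
    have lw: "length w = n" and c1: "card {i. i < n \<and> v ! i \<noteq> w ! i} = 1"
      using w(2) unfolding oig_adj_def by auto
    then obtain k where k: "{i. i < n \<and> v ! i \<noteq> w ! i} = {k}" using card_1_singletonE by blast
    have "{i. i < n \<and> w ! i \<noteq> v ! i} = {k}" using k by auto
    then have wk: "w = fl v k" using diff1[OF lw lv] by blast
    have kn: "k < n" using k by blast
    have "k \<in> ?K" using w(1) wk kn unfolding Kd_def by simp
    then have "\<forall>i<n. i \<notin> ?K \<longrightarrow> w ! i = v ! i"
    proof (intro allI impI)
      fix i assume "i < n" "i \<notin> ?K"
      then have "i \<noteq> k" using \<open>k \<in> ?K\<close> by blast
      then show "w ! i = v ! i" using wk by simp
    qed
    then show ?thesis unfolding cubeat_def using lw by simp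
  qed
  show ?thesis using umc nb by blast
qed

lemma FF_peelable:
  assumes "FF n C"
  shows "corner_peelable n C"
proof -
  have Cc: "C \<subseteq> cube_space n" using assms FF_cube by blast
  obtain vs where vs: "distinct vs" "set vs = C" "\<forall>t<length vs. corner n (C - set (take t vs)) (vs ! t)"
    using peel_list[OF assms] by blast
  have "corner_peeling n C vs"
    unfolding corner_peeling_def Let_def
  proof (intro conjI vs(1,2) allI impI)
    fix t assume t: "t < length vs"
    have "C - set (take t vs) \<subseteq> cube_space n" using Cc by blast
    then show "\<exists>Q. unique_max_cube n (C - set (take t vs)) (vs ! t) Q \<and>
      (\<forall>w\<in>C - set (take t vs). oig_adj n (vs ! t) w \<longrightarrow> w \<in> Q)"
      using corner_good vs(3) t by blast
  qed
  then show ?thesis unfolding corner_peelable_def by blast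
qed

definition normA :: "nat \<Rightarrow> nat set \<Rightarrow> bool list set \<Rightarrow> bool" where
  "normA n A X \<longleftrightarrow> X \<subseteq> cube_space n \<and> (\<forall>x\<in>X. \<forall>i<n. i \<notin> A \<longrightarrow> \<not> x ! i)"

definition vcle :: "nat \<Rightarrow> nat set \<Rightarrow> nat \<Rightarrow> bool list set \<Rightarrow> bool" where
  "vcle n A d X \<longleftrightarrow> (\<forall>S. S \<subseteq> A \<longrightarrow> card S = Suc d \<longrightarrow> \<not> shatters n X S)"

definition phi :: "nat \<Rightarrow> nat \<Rightarrow> nat" where
  "phi d m = (\<Sum>k\<le>d. m choose k)"

definition maxcls :: "nat \<Rightarrow> nat set \<Rightarrow> nat \<Rightarrow> bool list set \<Rightarrow> bool" where
  "maxcls n A d X \<longleftrightarrow> normA n A X \<and> vcle n A d X \<and> card X = phi d (card A)"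

definition prj :: "bool list set \<Rightarrow> nat \<Rightarrow> bool list set" where
  "prj X j = (\<lambda>x. x[j := False]) ` X"

definition red :: "bool list set \<Rightarrow> nat \<Rightarrow> bool list set" where
  "red X j = {x\<in>X. \<not> x ! j \<and> x[j := True] \<in> X}"

lemma phi_0m: "phi 0 m = 1" unfolding phi_def by simp

lemma phi_d0: "phi d 0 = 1"
  unfolding phi_def by (induction d) auto

lemma phi_Suc_d: "phi (Suc d) m = phi d m + (m choose Suc d)"
  unfolding phi_def by simp

lemma phi_Suc: "phi (Suc d) (Suc m) = phi (Suc d) m + phi d m"
proof (induction d)
  case 0 then show ?case unfolding phi_def by simp
next
  case (Suc d)
  have "phi (Suc (Suc d)) (Suc m) = phi (Suc d) (Suc m) + (Suc m choose Suc (Suc d))"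
    by (rule phi_Suc_d)
  also have "\<dots> = phi (Suc d) m + phi d m + ((m choose Suc d) + (m choose Suc (Suc d)))"
    using Suc by simp
  also have "\<dots> = (phi (Suc d) m + (m choose Suc (Suc d))) + (phi d m + (m choose Suc d))" by simp
  also have "\<dots> = phi (Suc (Suc d)) m + phi (Suc d) m" using phi_Suc_d by simp
  finally show ?case .
qed

lemma normA_cube: "normA n A X \<Longrightarrow> X \<subseteq> cube_space n" unfolding normA_def by simp

lemma normA_len: "normA n A X \<Longrightarrow> x \<in> X \<Longrightarrow> length x = n"
  unfolding normA_def cube_space_def by auto

lemma normA_out: "normA n A X \<Longrightarrow> x \<in> X \<Longrightarrow> i < n \<Longrightarrow> i \<notin> A \<Longrightarrow> \<not> x ! i"
  unfolding normA_def by blast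

lemma normA_fin: "normA n A X \<Longrightarrow> finite X"
  by (rule finite_subset[OF normA_cube finite_cube])

lemma upd_F_id: "\<not> x ! j \<Longrightarrow> x[j := False] = x"
  using list_update_id[of x j] by simp

lemma decomp:
  assumes A: "A \<subseteq> {..<n}" and j: "j \<in> A" and N: "normA n A X"
  shows "card X = card (prj X j) + card (red X j)"
proof -
  have jn: "j < n" using A j by blast
  have finX: "finite X" using N normA_fin by blast
  let ?XF = "{x\<in>X. \<not> x ! j}" and ?XT = "{x\<in>X. x ! j}"
  let ?f = "\<lambda>x::bool list. x[j := False]"
  have split: "X = ?XF \<union> ?XT" by blast
  have "card (?XF \<union> ?XT) = card ?XF + card ?XT" by (rule card_Un_disjoint) (use finX in auto)
  then have c1: "card X = card ?XF + card ?XT" using split by simp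
  have prjeq: "prj X j = ?XF \<union> ?f ` ?XT"
  proof
    show "prj X j \<subseteq> ?XF \<union> ?f ` ?XT"
    proof
      fix y assume "y \<in> prj X j"
      then obtain x where x: "x \<in> X" "y = x[j := False]" unfolding prj_def by blast
      show "y \<in> ?XF \<union> ?f ` ?XT"
      proof (cases "x ! j")
        case True then show ?thesis using x by blast
      next
        case False then have "y = x" using x(2) upd_F_id by simp
        then show ?thesis using x(1) False by blast
      qed
    qed
    show "?XF \<union> ?f ` ?XT \<subseteq> prj X j"
    proof
      fix y assume "y \<in> ?XF \<union> ?f ` ?XT"
      then show "y \<in> prj X j"
      proof
        assume "y \<in> ?XF" then have "y \<in> X" "y = y[j := False]" using upd_F_id by auto
        then show ?thesis unfolding prj_def by blast
      next
        assume "y \<in> ?f ` ?XT" then show ?thesis unfolding prj_def by blast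
      qed
    qed
  qed
  have inj: "inj_on ?f ?XT"
  proof (rule inj_onI)
    fix x y assume x: "x \<in> ?XT" and y: "y \<in> ?XT" and e: "x[j := False] = y[j := False]"
    have lx: "length x = n" and ly: "length y = n" using x y N normA_len by blast+
    show "x = y"
    proof (rule list_eqI[OF lx ly])
      fix i assume "i < n"
      show "x ! i = y ! i"
      proof (cases "i = j")
        case True then show ?thesis using x y by simp
      next
        case False
        then have "x[j := False] ! i = x ! i" "y[j := False] ! i = y ! i" by simp_all
        then show ?thesis using e by simp
      qed
    qed
  qed
  have inter: "?XF \<inter> ?f ` ?XT = red X j"
  proof
    show "?XF \<inter> ?f ` ?XT \<subseteq> red X j"
    proof
      fix y assume y: "y \<in> ?XF \<inter> ?f ` ?XT"
      then obtain x where x: "x \<in> X" "x ! j" "y = x[j := False]" by blast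
      have lx: "length x = n" using x(1) N normA_len by blast
      have "y[j := True] = x"
      proof (rule list_eqI[of _ n])
        fix i assume "i < n"
        then show "y[j := True] ! i = x ! i" using x lx jn by (cases "i = j") auto
      qed (use x lx in auto)
      then show "y \<in> red X j" using y x(1) unfolding red_def by simp
    qed
    show "red X j \<subseteq> ?XF \<inter> ?f ` ?XT"
    proof
      fix y assume y: "y \<in> red X j"
      then have y1: "y \<in> X" "\<not> y ! j" "y[j := True] \<in> X" unfolding red_def by auto
      have ly: "length y = n" using y1(1) N normA_len by blast
      have "y[j := True] ! j" using ly jn by simp
      moreover have "(y[j := True])[j := False] = y" using y1(2) upd_F_id by simp
      ultimately have "y \<in> ?f ` ?XT" using y1(3) by (intro image_eqI[of _ _ "y[j := True]"]) auto
      then show "y \<in> ?XF \<inter> ?f ` ?XT" using y1 by blast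
    qed
  qed
  have finF: "finite ?XF" and finI: "finite (?f ` ?XT)" using finX by auto
  have "card ?XF + card (?f ` ?XT) = card (prj X j) + card (red X j)"
    using card_Un_Int[OF finF finI] prjeq inter by simp
  moreover have "card (?f ` ?XT) = card ?XT" using card_image[OF inj] .
  ultimately show ?thesis using c1 by simp
qed

lemma normA_prj:
  assumes "normA n A X" "j < n"
  shows "normA n (A - {j}) (prj X j)"
  unfolding normA_def
proof (intro conjI ballI allI impI)
  show "prj X j \<subseteq> cube_space n" using assms normA_len unfolding prj_def cube_space_def by fastforce
next
  fix y i assume y: "y \<in> prj X j" and i: "i < n" "i \<notin> A - {j}"
  then obtain x where x: "x \<in> X" "y = x[j := False]" unfolding prj_def by blast
  have lx: "length x = n" using x(1) assms(1) normA_len by blast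
  show "\<not> y ! i"
  proof (cases "i = j")
    case True then show ?thesis using x lx assms(2) by simp
  next
    case False then have "i \<notin> A" using i by blast
    then show ?thesis using x False normA_out[OF assms(1) x(1) i(1)] by simp
  qed
qed

lemma normA_red:
  assumes "normA n A X"
  shows "normA n (A - {j}) (red X j)"
  using assms unfolding normA_def red_def by auto

lemma vcle_prj:
  assumes "vcle n A d X"
  shows "vcle n (A - {j}) d (prj X j)"
  unfolding vcle_def
proof (intro allI impI notI)
  fix S assume S: "S \<subseteq> A - {j}" "card S = Suc d" and sh: "shatters n (prj X j) S"
  have "shatters n X S" unfolding shatters_def
  proof (intro conjI allI impI)
    show "S \<subseteq> {..<n}" using sh unfolding shatters_def by blast
    fix T assume "T \<subseteq> S"
    then obtain c where c: "c \<in> prj X j" "\<forall>i\<in>S. c ! i = (i \<in> T)" using sh unfolding shatters_def by blast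
    then obtain x where x: "x \<in> X" "c = x[j := False]" unfolding prj_def by blast
    have "\<forall>i\<in>S. x ! i = (i \<in> T)"
    proof
      fix i assume iS: "i \<in> S" then have "i \<noteq> j" using S by blast
      have "c ! i = (i \<in> T)" using c(2) iS by blast
      moreover have "c ! i = x ! i" using x(2) \<open>i \<noteq> j\<close> by simp
      ultimately show "x ! i = (i \<in> T)" by simp
    qed
    then show "\<exists>c\<in>X. \<forall>i\<in>S. c ! i = (i \<in> T)" using x(1) by blast
  qed
  then show False using assms S unfolding vcle_def by blast
qed

lemma vcle_red:
  assumes V: "vcle n A (Suc d) X" and N: "normA n A X" and A: "A \<subseteq> {..<n}" and j: "j \<in> A"
  shows "vcle n (A - {j}) d (red X j)"
  unfolding vcle_def
proof (intro allI impI notI)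
  fix S assume S: "S \<subseteq> A - {j}" "card S = Suc d" and sh: "shatters n (red X j) S"
  have jn: "j < n" using A j by blast
  have finS: "finite S" by (rule card_ge_0_finite) (use S(2) in simp)
  have jS: "j \<notin> S" using S by blast
  have "shatters n X (insert j S)" unfolding shatters_def
  proof (intro conjI allI impI)
    show "insert j S \<subseteq> {..<n}" using sh jn unfolding shatters_def by blast
    fix T assume T: "T \<subseteq> insert j S"
    have "T - {j} \<subseteq> S" using T by blast
    then obtain c where c: "c \<in> red X j" "\<forall>i\<in>S. c ! i = (i \<in> T - {j})" using sh unfolding shatters_def by blast
    have c1: "c \<in> X" "\<not> c ! j" "c[j := True] \<in> X" using c(1) unfolding red_def by auto
    have lc: "length c = n" using c1(1) N normA_len by blast
    show "\<exists>c\<in>X. \<forall>i\<in>insert j S. c ! i = (i \<in> T)"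
    proof (cases "j \<in> T")
      case True
      have "\<forall>i\<in>insert j S. c[j := True] ! i = (i \<in> T)"
      proof
        fix i assume i: "i \<in> insert j S"
        show "c[j := True] ! i = (i \<in> T)"
        proof (cases "i = j")
          case True then show ?thesis using \<open>j \<in> T\<close> lc jn by simp
        next
          case False then show ?thesis using c(2) i by simp
        qed
      qed
      then show ?thesis using c1(3) by blast
    next
      case False
      have "\<forall>i\<in>insert j S. c ! i = (i \<in> T)"
      proof
        fix i assume i: "i \<in> insert j S"
        show "c ! i = (i \<in> T)"
        proof (cases "i = j")
          case True then show ?thesis using False c1(2) by simp
        next
          case False then show ?thesis using c(2) i by simp
        qed
      qed
      then show ?thesis using c1(1) by blast
    qed
  qed
  moreover have "insert j S \<subseteq> A" using S j by blast
  moreover have "card (insert j S) = Suc (Suc d)" using finS jS S(2) by simp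
  ultimately show False using V unfolding vcle_def by blast
qed

lemma red_empty:
  assumes V: "vcle n A 0 X" and N: "normA n A X" and A: "A \<subseteq> {..<n}" and j: "j \<in> A"
  shows "red X j = {}"
proof (rule ccontr)
  assume "red X j \<noteq> {}"
  then obtain c where c: "c \<in> X" "\<not> c ! j" "c[j := True] \<in> X" unfolding red_def by blast
  have jn: "j < n" using A j by blast
  have lc: "length c = n" using c(1) N normA_len by blast
  have "shatters n X {j}" unfolding shatters_def
  proof (intro conjI allI impI)
    show "{j} \<subseteq> {..<n}" using jn by simp
    fix T assume "T \<subseteq> {j}"
    then consider "T = {}" | "T = {j}" by blast
    then show "\<exists>c\<in>X. \<forall>i\<in>{j}. c ! i = (i \<in> T)"
    proof cases
      case 1 then show ?thesis using c(1,2) by auto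
    next
      case 2 then show ?thesis using c(3) lc jn by (intro bexI[of _ "c[j := True]"]) auto
    qed
  qed
  then show False using V j unfolding vcle_def by simp
qed

lemma sauer:
  assumes "finite A" "A \<subseteq> {..<n}" "normA n A X" "vcle n A d X"
  shows "card X \<le> phi d (card A)"
  using assms
proof (induction "card A" arbitrary: A d X rule: less_induct)
  case less
  show ?case
  proof (cases "A = {}")
    case True
    have "X \<subseteq> {replicate n False}"
    proof
      fix x assume x: "x \<in> X"
      have lx: "length x = n" using x less.prems(3) normA_len by blast
      have "x = replicate n False"
        by (rule list_eqI[OF lx]) (use normA_out[OF less.prems(3) x] True in auto)
      then show "x \<in> {replicate n False}" by simp
    qed
    then have "card X \<le> card {replicate n False}" by (intro card_mono) auto
    then have "card X \<le> 1" by simp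
    then show ?thesis using True phi_d0 by simp
  next
    case False
    then obtain j where j: "j \<in> A" by blast
    let ?A' = "A - {j}"
    have fA': "finite ?A'" and A'n: "?A' \<subseteq> {..<n}" using less.prems by auto
    have cA: "card A = Suc (card ?A')" using card_Suc_Diff1[OF less.prems(1) j] by simp
    have lt: "card ?A' < card A" using cA by simp
    have dec: "card X = card (prj X j) + card (red X j)" using decomp[OF less.prems(2) j less.prems(3)] .
    have jn: "j < n" using j less.prems(2) by blast
    have Np: "normA n ?A' (prj X j)" using normA_prj[OF less.prems(3) jn] .
    have Nr: "normA n ?A' (red X j)" using normA_red[OF less.prems(3)] .
    have Vp: "vcle n ?A' d (prj X j)" using vcle_prj[OF less.prems(4)] .
    have bp: "card (prj X j) \<le> phi d (card ?A')" using less.hyps[OF lt fA' A'n Np Vp] .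
    show ?thesis
    proof (cases d)
      case 0
      have "red X j = {}" using red_empty[OF _ less.prems(3) less.prems(2) j] less.prems(4) 0 by blast
      then show ?thesis using dec bp 0 cA phi_0m by simp
    next
      case (Suc d')
      have Vr: "vcle n ?A' d' (red X j)" using vcle_red[OF _ less.prems(3) less.prems(2) j] less.prems(4) Suc by blast
      have br: "card (red X j) \<le> phi d' (card ?A')" using less.hyps[OF lt fA' A'n Nr Vr] .
      show ?thesis using dec bp br Suc cA phi_Suc by simp
    qed
  qed
qed

lemma max_split:
  assumes M: "maxcls n A (Suc d) X" and fA: "finite A" and A: "A \<subseteq> {..<n}" and j: "j \<in> A"
  shows "maxcls n (A - {j}) (Suc d) (prj X j) \<and> maxcls n (A - {j}) d (red X j)"
proof -
  have N: "normA n A X" and V: "vcle n A (Suc d) X" and c: "card X = phi (Suc d) (card A)"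
    using M unfolding maxcls_def by auto
  let ?A' = "A - {j}"
  have fA': "finite ?A'" and A'n: "?A' \<subseteq> {..<n}" using fA A by auto
  have cA: "card A = Suc (card ?A')" using card_Suc_Diff1[OF fA j] by simp
  have jn: "j < n" using A j by blast
  have dec: "card X = card (prj X j) + card (red X j)" using decomp[OF A j N] .
  have Np: "normA n ?A' (prj X j)" using normA_prj[OF N jn] .
  have Nr: "normA n ?A' (red X j)" using normA_red[OF N] .
  have Vp: "vcle n ?A' (Suc d) (prj X j)" using vcle_prj[OF V] .
  have Vr: "vcle n ?A' d (red X j)" using vcle_red[OF V N A j] .
  have bp: "card (prj X j) \<le> phi (Suc d) (card ?A')" using sauer[OF fA' A'n Np Vp] .
  have br: "card (red X j) \<le> phi d (card ?A')" using sauer[OF fA' A'n Nr Vr] .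
  have sum: "card (prj X j) + card (red X j) = phi (Suc d) (card ?A') + phi d (card ?A')"
    using dec c cA phi_Suc by simp
  have "card (prj X j) = phi (Suc d) (card ?A')" using bp br sum by linarith
  moreover have "card (red X j) = phi d (card ?A')" using bp br sum by linarith
  ultimately show ?thesis unfolding maxcls_def using Np Nr Vp Vr by blast
qed

lemma max_prj:
  assumes M: "maxcls n A d X" and fA: "finite A" and A: "A \<subseteq> {..<n}" and j: "j \<in> A"
  shows "maxcls n (A - {j}) d (prj X j)"
proof (cases d)
  case 0
  have N: "normA n A X" and V: "vcle n A 0 X" and c: "card X = 1"
    using M 0 phi_0m unfolding maxcls_def by auto
  have jn: "j < n" using A j by blast
  have "red X j = {}" using red_empty[OF V N A j] .
  then have "card (prj X j) = 1" using decomp[OF A j N] c by simp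
  then show ?thesis unfolding maxcls_def using normA_prj[OF N jn] vcle_prj[OF V] 0 phi_0m by simp
next
  case (Suc d')
  then show ?thesis using max_split[of n A d' X j] M fA A j by simp
qed

lemma max_red:
  assumes M: "maxcls n A (Suc d) X" and fA: "finite A" and A: "A \<subseteq> {..<n}" and j: "j \<in> A"
  shows "maxcls n (A - {j}) d (red X j)"
  using max_split[OF M fA A j] by blast

lemma prj_red_sub: "prj (red X i) k \<subseteq> red (prj X k) i" if "i \<noteq> k"
proof
  fix x assume "x \<in> prj (red X i) k"
  then obtain q where q: "q \<in> X" "\<not> q ! i" "q[i := True] \<in> X" "x = q[k := False]"
    unfolding prj_def red_def by blast
  have "x \<in> prj X k" using q(1,4) unfolding prj_def by blast
  moreover have "\<not> x ! i" using q(2,4) that by simp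
  moreover have "x[i := True] = (q[i := True])[k := False]" using q(4) that by (simp add: list_update_swap)
  then have "x[i := True] \<in> prj X k" using q(3) unfolding prj_def by blast
  ultimately show "x \<in> red (prj X k) i" unfolding red_def by blast
qed

lemma maxGP:
  assumes "finite A" "A \<subseteq> {..<n}" "maxcls n A d X"
  shows "GP n X"
  using assms
proof (induction "card A" arbitrary: A d X rule: less_induct)
  case less
  have fA: "finite A" and An: "A \<subseteq> {..<n}" and M: "maxcls n A d X" using less.prems by auto
  have N: "normA n A X" and cX: "card X = phi d (card A)" using M unfolding maxcls_def by auto
  have finX: "finite X" using N normA_fin by blast
  show ?case unfolding GP_def
  proof (intro ballI impI)
    fix u w assume u: "u \<in> X" and w: "w \<in> X" and uw: "u \<noteq> w"
    have lu: "length u = n" and lw: "length w = n" using u w N normA_len by blast+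
    have "\<exists>i<n. u ! i \<noteq> w ! i"
    proof (rule ccontr)
      assume "\<not> (\<exists>i<n. u ! i \<noteq> w ! i)"
      then have "u = w" by (intro list_eqI[OF lu lw]) auto
      then show False using uw by blast
    qed
    then obtain i where i: "i < n" "u ! i \<noteq> w ! i" by blast
    have iA: "i \<in> A"
    proof (rule ccontr)
      assume "i \<notin> A"
      then have "\<not> u ! i" "\<not> w ! i" using normA_out[OF N u i(1)] normA_out[OF N w i(1)] by auto
      then show False using i(2) by simp
    qed
    show "\<exists>k<n. u ! k \<noteq> w ! k \<and> fl u k \<in> X"
    proof (cases "fl u i \<in> X")
      case True then show ?thesis using i by blast
    next
      case noi: False
      obtain d' where d: "d = Suc d'"
      proof (cases d)
        case 0
        then have "card X = 1" using cX phi_0m by simp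
        moreover have "card {u, w} \<le> card X" using u w finX by (intro card_mono) auto
        ultimately show ?thesis using uw by simp
      qed
      let ?u' = "u[i := False]" and ?w' = "w[i := False]"
      have u'w': "?u' \<noteq> ?w'"
      proof
        assume e: "?u' = ?w'"
        have "w = fl u i"
        proof (rule list_eqI[OF lw])
          show "length (fl u i) = n" using lu by simp
          fix m assume m: "m < n"
          show "w ! m = fl u i ! m"
          proof (cases "m = i")
            case True then show ?thesis using i lu by simp
          next
            case False
            have "?u' ! m = ?w' ! m" using e by simp
            then show ?thesis using False by simp
          qed
        qed
        then show False using noi w by simp
      qed
      let ?A' = "A - {i}"
      have cA: "card A = Suc (card ?A')" using card_Suc_Diff1[OF fA iA] by simp
      have Mp: "maxcls n ?A' d (prj X i)" using max_prj[OF M fA An iA] .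
      have GPp: "GP n (prj X i)" using less.hyps[of ?A' d "prj X i"] cA fA An Mp by auto
      have u'X: "?u' \<in> prj X i" and w'X: "?w' \<in> prj X i" using u w unfolding prj_def by auto
      obtain k where k: "k < n" "?u' ! k \<noteq> ?w' ! k" "fl ?u' k \<in> prj X i"
        using GPp u'X w'X u'w' unfolding GP_def by blast
      have ki: "k \<noteq> i"
      proof
        assume "k = i" then show False using k(2) lu lw i(1) by simp
      qed
      have ukw: "u ! k \<noteq> w ! k" using k(2) ki by simp
      have kA: "k \<in> A"
      proof (rule ccontr)
        assume "k \<notin> A"
        then have "\<not> u ! k" "\<not> w ! k" using normA_out[OF N u k(1)] normA_out[OF N w k(1)] by auto
        then show False using ukw by simp
      qed
      show ?thesis
      proof (cases "fl u k \<in> X")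
        case True then show ?thesis using k(1) ukw by blast
      next
        case nok: False
        obtain y where y0: "y \<in> X" "fl ?u' k = y[i := False]" using k(3) unfolding prj_def by blast
        have y: "y \<in> X" "y[i := False] = fl ?u' k" using y0 by simp_all
        have ly: "length y = n" using y(1) N normA_len by blast
        have yagree: "y ! m = fl u k ! m" if "m < n" "m \<noteq> i" for m
        proof -
          have "y[i := False] ! m = y ! m" using that by simp
          moreover have "fl ?u' k ! m = fl u k ! m" using that lu unfolding fl_def by (cases "m = k") auto
          ultimately show ?thesis using y(2) by simp
        qed
        have yi: "y ! i \<noteq> u ! i"
        proof
          assume yi: "y ! i = u ! i"
          have "y = fl u k"
          proof (rule list_eqI[OF ly])
            show "length (fl u k) = n" using lu by simp
            fix m assume "m < n"
            then show "y ! m = fl u k ! m" using yagree yi ki by (cases "m = i") auto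
          qed
          then show False using y(1) nok by simp
        qed
        define p where "p = (u[k := False])[i := False]"
        have lp: "length p = n" unfolding p_def using lu by simp
        have pX: "p \<in> prj X k"
        proof -
          have "p = (if u ! i then y else u)[k := False]"
          proof (rule list_eqI[OF lp])
            show "length ((if u ! i then y else u)[k := False]) = n" using lu ly by simp
            fix m assume m: "m < n"
            show "p ! m = (if u ! i then y else u)[k := False] ! m"
            proof (cases "m = k")
              case True then show ?thesis unfolding p_def using m lu ly ki by simp
            next
              case mk: False
              show ?thesis
              proof (cases "m = i")
                case True then show ?thesis unfolding p_def using m lu ly ki mk yi by auto
              next
                case False then show ?thesis unfolding p_def using m lu ly mk yagree[OF m False] by auto
              qed
            qed
          qed
          then show ?thesis unfolding prj_def using u y(1) by auto
        qed
        have piX: "p[i := True] \<in> prj X k"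
        proof -
          have "p[i := True] = (if u ! i then u else y)[k := False]"
          proof (rule list_eqI[OF _ ])
            show "length (p[i := True]) = n" using lp by simp
            show "length ((if u ! i then u else y)[k := False]) = n" using lu ly by simp
            fix m assume m: "m < n"
            show "p[i := True] ! m = (if u ! i then u else y)[k := False] ! m"
            proof (cases "m = k")
              case True then show ?thesis unfolding p_def using m lu ly ki by simp
            next
              case mk: False
              show ?thesis
              proof (cases "m = i")
                case True then show ?thesis unfolding p_def using m lu ly ki mk yi by auto
              next
                case False then show ?thesis unfolding p_def using m lu ly mk yagree[OF m False] by auto
              qed
            qed
          qed
          then show ?thesis unfolding prj_def using u y(1) by auto
        qed
        have pi: "\<not> p ! i" unfolding p_def using lu i(1) by simp
        have pred: "p \<in> red (prj X k) i" unfolding red_def using pX piX pi by blast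
        have kA': "k \<in> A - {i}" using kA ki by blast
        have iA': "i \<in> A - {k}" using iA ki by blast
        have M1: "maxcls n (A - {k}) (Suc d') (prj X k)" using max_prj[OF M fA An kA] d by simp
        have M2: "maxcls n (A - {k} - {i}) d' (red (prj X k) i)"
          using max_red[OF M1 _ _ iA'] fA An by blast
        have M3: "maxcls n (A - {i}) d' (red X i)" using max_red[OF _ fA An iA] M d by simp
        have M4: "maxcls n (A - {i} - {k}) d' (prj (red X i) k)"
          using max_prj[OF M3 _ _ kA'] fA An by blast
        have Aeq: "A - {k} - {i} = A - {i} - {k}" by blast
        have ceq: "card (prj (red X i) k) = card (red (prj X k) i)"
          using M2 M4 Aeq unfolding maxcls_def by simp
        have fin2: "finite (red (prj X k) i)" using M2 normA_fin unfolding maxcls_def by blast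
        have seq: "prj (red X i) k = red (prj X k) i"
        proof -
          have ik: "i \<noteq> k" using ki by simp
          show ?thesis using card_subset_eq[OF fin2 prj_red_sub[where X=X and i=i and k=k, OF ik] ceq] .
        qed
        then have "p \<in> prj (red X i) k" using pred by simp
        then obtain q where q: "q \<in> X" "\<not> q ! i" "q[i := True] \<in> X" "p = q[k := False]"
          unfolding prj_def red_def by blast
        have lq: "length q = n" using q(1) N normA_len by blast
        have qagree: "q ! m = u ! m" if "m < n" "m \<noteq> i" "m \<noteq> k" for m
        proof -
          have "p ! m = u ! m" unfolding p_def using that by simp
          moreover have "p ! m = q ! m" using q(4) that by simp
          ultimately show ?thesis by simp
        qed
        show ?thesis
        proof (cases "q ! k = u ! k")
          case qk: True
          have "fl u i = (if u ! i then q else q[i := True])"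
          proof (rule list_eqI[of _ n])
            show "length (fl u i) = n" using lu by simp
            show "length (if u ! i then q else q[i := True]) = n" using lq by simp
            fix m assume m: "m < n"
            show "fl u i ! m = (if u ! i then q else q[i := True]) ! m"
            proof (cases "m = i")
              case True then show ?thesis using m lu lq q(2) by auto
            next
              case mi: False
              show ?thesis
              proof (cases "m = k")
                case True then show ?thesis using mi qk by simp
              next
                case False then show ?thesis using mi qagree[OF m mi False] by simp
              qed
            qed
          qed
          then have "fl u i \<in> X" using q(1,3) by simp
          then show ?thesis using noi by blast
        next
          case qk: False
          have "fl u k = (if u ! i then q[i := True] else q)"
          proof (rule list_eqI[of _ n])
            show "length (fl u k) = n" using lu by simp
            show "length (if u ! i then q[i := True] else q) = n" using lq by simp
            fix m assume m: "m < n"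
            show "fl u k ! m = (if u ! i then q[i := True] else q) ! m"
            proof (cases "m = i")
              case True then show ?thesis using m lu lq q(2) ki by auto
            next
              case mi: False
              show ?thesis
              proof (cases "m = k")
                case True then show ?thesis using mi qk m lu by auto
              next
                case False then show ?thesis using mi qagree[OF m mi False] by simp
              qed
            qed
          qed
          then have "fl u k \<in> X" using q(1,3) by simp
          then show ?thesis using nok by blast
        qed
      qed
    qed
  qed
qed

lemma GP_img:
  assumes G: "GP n X" and X: "X \<subseteq> cube_space n" and j: "j < n"
  shows "GP n ((\<lambda>x. fl x j) ` X)"
  unfolding GP_def
proof (intro ballI impI)
  fix u w assume u: "u \<in> (\<lambda>x. fl x j) ` X" and w: "w \<in> (\<lambda>x. fl x j) ` X" and uw: "u \<noteq> w"
  obtain u0 where u0: "u0 \<in> X" "u = fl u0 j" using u by blast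
  obtain w0 where w0: "w0 \<in> X" "w = fl w0 j" using w by blast
  have "u0 \<noteq> w0" using uw u0 w0 by blast
  then obtain k where k: "k < n" "u0 ! k \<noteq> w0 ! k" "fl u0 k \<in> X" using G u0 w0 unfolding GP_def by blast
  have lu: "length u0 = n" and lw: "length w0 = n" using u0 w0 X cube_len by blast+
  have "u ! k \<noteq> w ! k"
  proof (cases "k = j")
    case True then show ?thesis using u0 w0 k lu lw by simp
  next
    case False then show ?thesis using u0 w0 k by simp
  qed
  moreover have "fl u k = fl (fl u0 k) j" unfolding u0(2) by (rule fl_swap)
  then have "fl u k \<in> (\<lambda>x. fl x j) ` X" using k(3) by blast
  ultimately show "\<exists>k<n. u ! k \<noteq> w ! k \<and> fl u k \<in> (\<lambda>x. fl x j) ` X" using k(1) by blast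
qed

lemma Nb_F:
  assumes "C \<subseteq> cube_space n" "j < n"
  shows "Nb C j False = red C j"
  unfolding Nb_def red_def
proof (rule Collect_cong)
  fix x
  show "(x \<in> C \<and> x ! j = False \<and> fl x j \<in> C) = (x \<in> C \<and> \<not> x ! j \<and> x[j := True] \<in> C)"
    by (cases "x ! j") (simp_all add: fl_def)
qed

lemma Nb_T:
  assumes C: "C \<subseteq> cube_space n" and j: "j < n"
  shows "Nb C j True = (\<lambda>x. fl x j) ` red C j"
proof
  show "Nb C j True \<subseteq> (\<lambda>x. fl x j) ` red C j"
  proof
    fix x assume x: "x \<in> Nb C j True"
    then have x1: "x \<in> C" "x ! j" "fl x j \<in> C" unfolding Nb_def by auto
    have lx: "length x = n" using x1(1) C cube_len by blast
    have "fl x j \<in> red C j"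
    proof -
      have "\<not> fl x j ! j" using x1(2) lx j by simp
      moreover have "(fl x j)[j := True] = x"
      proof (rule list_eqI[of _ n])
        fix m assume "m < n"
        then show "(fl x j)[j := True] ! m = x ! m" using x1(2) lx j by (cases "m = j") auto
      qed (use lx in auto)
      ultimately show ?thesis using x1 unfolding red_def by simp
    qed
    moreover have "x = fl (fl x j) j" using lx j by simp
    ultimately show "x \<in> (\<lambda>x. fl x j) ` red C j" by blast
  qed
  show "(\<lambda>x. fl x j) ` red C j \<subseteq> Nb C j True"
  proof
    fix z assume "z \<in> (\<lambda>x. fl x j) ` red C j"
    then obtain y where y: "y \<in> C" "\<not> y ! j" "y[j := True] \<in> C" "z = fl y j" unfolding red_def by blast
    have ly: "length y = n" using y(1) C cube_len by blast
    have zy: "z = y[j := True]" using y(2,4) unfolding fl_def by simp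
    have "fl z j = y"
    proof (rule list_eqI[of _ n])
      fix m assume "m < n"
      then show "fl z j ! m = y ! m" using zy y(2) ly j by (cases "m = j") auto
    qed (use zy ly in auto)
    then show "z \<in> Nb C j True" using y zy ly j unfolding Nb_def by simp
  qed
qed

lemma VC1_Nb:
  assumes V: "vcle n {..<n} 2 C" and C: "C \<subseteq> cube_space n" and j: "j < n"
  shows "VC1 n (Nb C j a)"
  unfolding VC1_def
proof (intro allI impI notI)
  fix k l assume k: "k < n" and l: "l < n" and kl: "k \<noteq> l"
    and all: "\<forall>a' b'. \<exists>x\<in>Nb C j a. x ! k = a' \<and> x ! l = b'"
  have kj: "k \<noteq> j"
  proof
    assume "k = j"
    obtain x where "x \<in> Nb C j a" "x ! k = (\<not> a)" using all by blast
    then show False using \<open>k = j\<close> unfolding Nb_def by simp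
  qed
  have lj: "l \<noteq> j"
  proof
    assume "l = j"
    obtain x where "x \<in> Nb C j a" "x ! l = (\<not> a)" using all by blast
    then show False using \<open>l = j\<close> unfolding Nb_def by simp
  qed
  have "shatters n C {j, k, l}" unfolding shatters_def
  proof (intro conjI allI impI)
    show "{j, k, l} \<subseteq> {..<n}" using j k l by simp
    fix T assume T: "T \<subseteq> {j, k, l}"
    obtain x where x: "x \<in> Nb C j a" "x ! k = (k \<in> T)" "x ! l = (l \<in> T)" using all by blast
    have x1: "x \<in> C" "x ! j = a" "fl x j \<in> C" using x(1) unfolding Nb_def by auto
    have lx: "length x = n" using x1(1) C cube_len by blast
    show "\<exists>c\<in>C. \<forall>i\<in>{j, k, l}. c ! i = (i \<in> T)"
    proof (cases "(j \<in> T) = a")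
      case True
      have "\<forall>i\<in>{j, k, l}. x ! i = (i \<in> T)"
      proof
        fix i assume "i \<in> {j, k, l}"
        then consider "i = j" | "i = k" | "i = l" by blast
        then show "x ! i = (i \<in> T)"
        proof cases
          case 1 then show ?thesis using True x1(2) by simp
        next
          case 2 then show ?thesis using x(2) by simp
        next
          case 3 then show ?thesis using x(3) by simp
        qed
      qed
      then show ?thesis using x1(1) by blast
    next
      case False
      have "\<forall>i\<in>{j, k, l}. fl x j ! i = (i \<in> T)"
      proof
        fix i assume "i \<in> {j, k, l}"
        then consider "i = j" | "i = k" | "i = l" by blast
        then show "fl x j ! i = (i \<in> T)"
        proof cases
          case 1 then show ?thesis using False x1(2) lx j by auto
        next
          case 2 then show ?thesis using x(2) kj by simp
        next
          case 3 then show ?thesis using x(3) lj by simp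
        qed
      qed
      then show ?thesis using x1(3) by blast
    qed
  qed
  moreover have "card {j, k, l} = Suc 2" using kj lj kl by simp
  moreover have "{j, k, l} \<subseteq> {..<n}" using j k l by simp
  ultimately show False using V unfolding vcle_def by blast
qed

theorem theorem7:
  fixes n :: nat and C :: "bool list set"
  assumes "maximum_vc2 n C"
  shows "corner_peelable n C"
proof -
  have Cc: "C \<subseteq> cube_space n" and vc: "vc_dim n C = 2" and cC: "card C = 1 + n + (n choose 2)"
    using assms unfolding maximum_vc2_def by auto
  have N: "normA n {..<n} C" unfolding normA_def using Cc by simp
  have V: "vcle n {..<n} 2 C" unfolding vcle_def
  proof (intro allI impI notI)
    fix S assume S: "S \<subseteq> {..<n}" "card S = Suc 2" and sh: "shatters n C S"
    have fin: "finite {card S | S. shatters n C S}"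
    proof (rule finite_subset[of _ "{..n}"])
      show "{card S | S. shatters n C S} \<subseteq> {..n}"
      proof
        fix m assume "m \<in> {card S | S. shatters n C S}"
        then obtain S' where S': "m = card S'" "shatters n C S'" by blast
        then have "S' \<subseteq> {..<n}" unfolding shatters_def by blast
        then have "card S' \<le> card {..<n}" by (intro card_mono) auto
        then show "m \<in> {..n}" using S' by simp
      qed
    qed simp
    have "card S \<in> {card S | S. shatters n C S}" using sh by blast
    then have "card S \<le> vc_dim n C" unfolding vc_dim_def using fin by (simp add: Max_ge)
    then show False using vc S(2) by simp
  qed
  have ph: "phi 2 n = 1 + n + (n choose 2)"
    unfolding phi_def by (simp add: numeral_2_eq_2)
  have M: "maxcls n {..<n} 2 C" unfolding maxcls_def using N V cC ph by simp
  have "FF n C" unfolding FF_def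
  proof (rule conjI[OF Cc], intro allI impI)
    fix j a assume j: "j < n"
    have jA: "j \<in> {..<n}" using j by simp
    have Mr: "maxcls n ({..<n} - {j}) 1 (red C j)"
      using max_red[of n "{..<n}" 1 C j] M jA by (simp add: numeral_2_eq_2)
    have Gr: "GP n (red C j)" by (rule maxGP[OF _ _ Mr]) auto
    have rc: "red C j \<subseteq> cube_space n" using Cc unfolding red_def by blast
    have "GP n (Nb C j a)"
    proof (cases a)
      case True then show ?thesis using Nb_T[OF Cc j] GP_img[OF Gr rc j] by simp
    next
      case False then show ?thesis using Nb_F[OF Cc j] Gr by simp
    qed
    moreover have "VC1 n (Nb C j a)" using VC1_Nb[OF V Cc j] .
    ultimately show "GP n (Nb C j a) \<and> VC1 n (Nb C j a)" by blast
  qed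
  then show ?thesis by (rule FF_peelable)
qed

end
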